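(* Let $G$ be a finite group, let $\chi$ be an irreducible complex character of $G$, and write $\chi\otimes\bar\chi=a_1\chi_1+\cdots+a_q\chi_q$, where the $a_i$ are positive integers and the $\chi_i$ are irreducible characters of $G$ of dimensions $n_i=\chi_i(1)$, $i=1,\dots,q$. Then for every $g\in G$, $$c(g)\le\frac{(a_1/n_1^2)\chi_1(g)+\cdots+(a_q/n_q^2)\chi_q(g)}{a_1n_1+\cdots+a_qn_q},$$ and therefore $$c(G)\le\frac{a_1/n_1+\cdots+a_q/n_q}{a_1n_1+\cdots+a_qn_q}.$$
   Context: For $g\in G$, $c(g)=|\{(x,y)\in G\times G:[x,y]=g\}|/|G|^2$, and $c(G)=c(1)$. $\bar\chi$ denotes the complex conjugate character. *)

theory Defs
  imports "HOL-Algebra.Group" "Jordan_Normal_Form.Matrix"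
begin

definition mat_trace :: "complex mat \<Rightarrow> complex" where
  "mat_trace A = (\<Sum>i<dim_row A. A $$ (i, i))"

definition is_rep :: "('a, 'b) monoid_scheme \<Rightarrow> nat \<Rightarrow> ('a \<Rightarrow> complex mat) \<Rightarrow> bool" where
  "is_rep G n \<rho> \<longleftrightarrow>
     (\<forall>g\<in>carrier G. \<rho> g \<in> carrier_mat n n) \<and>
     (\<forall>g\<in>carrier G. \<forall>h\<in>carrier G. \<rho> (g \<otimes>\<^bsub>G\<^esub> h) = \<rho> g * \<rho> h) \<and>
     \<rho> \<one>\<^bsub>G\<^esub> = 1\<^sub>m n"

definition is_subspace :: "nat \<Rightarrow> complex vec set \<Rightarrow> bool" where
  "is_subspace n W \<longleftrightarrow> W \<subseteq> carrier_vec n \<and> 0\<^sub>v n \<in> W \<and>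
     (\<forall>v\<in>W. \<forall>w\<in>W. v + w \<in> W) \<and> (\<forall>c. \<forall>v\<in>W. c \<cdot>\<^sub>v v \<in> W)"

definition irreducible_rep :: "('a, 'b) monoid_scheme \<Rightarrow> nat \<Rightarrow> ('a \<Rightarrow> complex mat) \<Rightarrow> bool" where
  "irreducible_rep G n \<rho> \<longleftrightarrow> is_rep G n \<rho> \<and> n \<ge> 1 \<and>
     (\<forall>W. is_subspace n W \<and> (\<forall>g\<in>carrier G. \<forall>w\<in>W. \<rho> g *\<^sub>v w \<in> W)
          \<longrightarrow> W = {0\<^sub>v n} \<or> W = carrier_vec n)"

definition irr_char :: "('a, 'b) monoid_scheme \<Rightarrow> ('a \<Rightarrow> complex) \<Rightarrow> bool" where
  "irr_char G \<chi> \<longleftrightarrow> (\<exists>n \<rho>. irreducible_rep G n \<rho> \<and>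
     (\<forall>g\<in>carrier G. \<chi> g = mat_trace (\<rho> g)))"

definition commutator :: "('a, 'b) monoid_scheme \<Rightarrow> 'a \<Rightarrow> 'a \<Rightarrow> 'a" where
  "commutator G x y = inv\<^bsub>G\<^esub> x \<otimes>\<^bsub>G\<^esub> inv\<^bsub>G\<^esub> y \<otimes>\<^bsub>G\<^esub> x \<otimes>\<^bsub>G\<^esub> y"

definition comm_prob :: "('a, 'b) monoid_scheme \<Rightarrow> 'a \<Rightarrow> real" where
  "comm_prob G g = real (card {(x, y). x \<in> carrier G \<and> y \<in> carrier G \<and> commutator G x y = g})
     / real (card (carrier G)) ^ 2"

end

theory Submission
  imports Defs "Jordan_Normal_Form.Spectral_Radius"
begin

lemma mult_entry:
  assumes "A \<in> carrier_mat n k" "B \<in> carrier_mat k l" "i < n" "j < l"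
  shows "(A * B) $$ (i, j) = (\<Sum>r<k. A $$ (i, r) * B $$ (r, j))"
  using assms by (auto simp: scalar_prod_def lessThan_atLeast0 intro!: sum.cong)

lemma schur:
  assumes irr: "irreducible_rep G m \<sigma>" and M: "M \<in> carrier_mat m m"
    and comm: "\<forall>g\<in>carrier G. \<sigma> g * M = M * \<sigma> g"
  shows "\<exists>c. \<forall>i<m. \<forall>j<m. M $$ (i, j) = (if i = j then c else 0)"
proof -
  have m: "m > 0" and rep: "is_rep G m \<sigma>" using irr unfolding irreducible_rep_def by auto
  have sc: "\<And>g. g \<in> carrier G \<Longrightarrow> \<sigma> g \<in> carrier_mat m m" using rep unfolding is_rep_def by auto
  obtain c where "eigenvalue M c" using spectrum_non_empty[OF M m] unfolding spectrum_def by auto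
  then obtain v where v: "v \<in> carrier_vec m" "v \<noteq> 0\<^sub>v m" "M *\<^sub>v v = c \<cdot>\<^sub>v v"
    unfolding eigenvalue_def eigenvector_def using M by auto
  define W where "W = {w \<in> carrier_vec m. M *\<^sub>v w = c \<cdot>\<^sub>v w}"
  have sub: "is_subspace m W"
    unfolding is_subspace_def W_def
  proof (intro conjI ballI allI)
    show "0\<^sub>v m \<in> {w \<in> carrier_vec m. M *\<^sub>v w = c \<cdot>\<^sub>v w}" using M by auto
  next
    fix x y assume "x \<in> {w \<in> carrier_vec m. M *\<^sub>v w = c \<cdot>\<^sub>v w}" "y \<in> {w \<in> carrier_vec m. M *\<^sub>v w = c \<cdot>\<^sub>v w}"
    then show "x + y \<in> {w \<in> carrier_vec m. M *\<^sub>v w = c \<cdot>\<^sub>v w}"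
      using M by (auto simp: mult_add_distrib_mat_vec smult_add_distrib_vec)
  next
    fix k x assume "x \<in> {w \<in> carrier_vec m. M *\<^sub>v w = c \<cdot>\<^sub>v w}"
    then show "k \<cdot>\<^sub>v x \<in> {w \<in> carrier_vec m. M *\<^sub>v w = c \<cdot>\<^sub>v w}"
      using M by (auto simp: mult_mat_vec smult_smult_assoc mult.commute)
  qed auto
  have inv: "\<forall>g\<in>carrier G. \<forall>w\<in>W. \<sigma> g *\<^sub>v w \<in> W"
  proof (intro ballI)
    fix g w assume g: "g \<in> carrier G" and w: "w \<in> W"
    have wc: "w \<in> carrier_vec m" using w W_def by auto
    have "M *\<^sub>v (\<sigma> g *\<^sub>v w) = (M * \<sigma> g) *\<^sub>v w" using M sc[OF g] wc by simp
    also have "\<dots> = (\<sigma> g * M) *\<^sub>v w" using comm g by simp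
    also have "\<dots> = \<sigma> g *\<^sub>v (c \<cdot>\<^sub>v w)" using M sc[OF g] wc w W_def by simp
    also have "\<dots> = c \<cdot>\<^sub>v (\<sigma> g *\<^sub>v w)" using sc[OF g] wc by (simp add: mult_mat_vec)
    finally show "\<sigma> g *\<^sub>v w \<in> W" using W_def sc[OF g] wc by auto
  qed
  have "W = {0\<^sub>v m} \<or> W = carrier_vec m" using irr sub inv unfolding irreducible_rep_def by blast
  moreover have "v \<in> W" using v W_def by auto
  ultimately have Wc: "W = carrier_vec m" using v by auto
  show ?thesis
  proof (intro exI allI impI)
    fix i j assume i: "i < m" and j: "j < m"
    have "unit_vec m j \<in> W" using Wc by simp
    hence "M *\<^sub>v unit_vec m j = c \<cdot>\<^sub>v unit_vec m j" using W_def by auto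
    hence "(M *\<^sub>v unit_vec m j) $ i = (c \<cdot>\<^sub>v unit_vec m j) $ i" by simp
    thus "M $$ (i, j) = (if i = j then c else 0)" using M i j by simp
  qed
qed

lemma diag_sum: "(\<Sum>k<(m::nat). \<Sum>j<m. (F j k :: 'a::comm_ring_1) * (if j = k then c else 0)) = (\<Sum>j<m. F j j * c)"
  by (auto simp: if_distrib[where f = "\<lambda>t. _ * t"] cong: if_cong intro!: sum.cong)
lemma diag_sum2: "(\<Sum>l<(m::nat). \<Sum>k<m. \<Sum>j<m. (F j k l :: 'a::comm_ring_1) * (if i = l \<and> j = k then c else 0)) = (if i < m then \<Sum>j<m. F j j i * c else 0)"
proof -
  have "(\<Sum>l<m. \<Sum>k<m. \<Sum>j<m. F j k l * (if i = l \<and> j = k then c else 0)) = (\<Sum>l<m. if i = l then (\<Sum>k<m. \<Sum>j<m. F j k l * (if j = k then c else 0)) else 0)"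
    by (intro sum.cong refl) auto
  also have "\<dots> = (if i < m then \<Sum>k<m. \<Sum>j<m. F j k i * (if j = k then c else 0) else 0)" by simp
  finally show ?thesis by (simp add: diag_sum)
qed
lemma mult_if0: "(x::'a::comm_ring_1) * (if P then c else 0) = (if P then x * c else 0)" by simp
lemma diag_sum3: "(\<Sum>j<(m::nat). \<Sum>k<m. (F k j :: 'a::comm_ring_1) * (if i = k \<and> i = j then c else 0)) = (if i < m then F i i * c else 0)"
proof -
  have "(\<Sum>j<m. \<Sum>k<m. F k j * (if i = k \<and> i = j then c else 0)) = (\<Sum>j<m. if i = j then (\<Sum>k<m. if i = k then F k j * c else 0) else 0)"
  proof (intro sum.cong refl)
    fix j show "(\<Sum>k<m. F k j * (if i = k \<and> i = j then c else 0)) = (if i = j then (\<Sum>k<m. if i = k then F k j * c else 0) else 0)"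
      by (cases "i = j"; simp only: mult_if0 simp_thms if_False if_True mult_zero_right sum.neutral_const)
  qed
  also have "\<dots> = (\<Sum>j<m. if i = j then (if i < m then F i j * c else 0) else 0)"
    by (intro sum.cong refl) (simp only: sum.delta'[OF finite_lessThan] lessThan_iff)
  finally show ?thesis by simp
qed

lemma sum_reindex_right:
  fixes G (structure)
  assumes "group G" "g \<in> carrier G"
  shows "(\<Sum>x\<in>carrier G. h (x \<otimes>\<^bsub>G\<^esub> g)) = (\<Sum>x\<in>carrier G. h x)"
proof -
  interpret group G by fact
  show ?thesis
    by (rule sum.reindex_bij_witness[where i = "\<lambda>y. y \<otimes> inv g" and j = "\<lambda>x. x \<otimes> g"])
      (use assms(2) in \<open>auto simp: m_assoc\<close>)
qed

lemma assoc4: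
  assumes "A \<in> carrier_mat n n" "B \<in> carrier_mat n n" "C \<in> carrier_mat n n" "D \<in> carrier_mat n n"
  shows "A * (B * C * D) = A * B * C * D" "B * C * D * A = B * C * (D * A)"
  using assms by (auto simp: assoc_mult_mat[of _ n n _ n _ n])

locale irrep =
  fixes G :: "('a, 'b) monoid_scheme" (structure) and m :: nat and \<sigma> :: "'a \<Rightarrow> complex mat"
  assumes grp: "group G" and fin: "finite (carrier G)" and irr: "irreducible_rep G m \<sigma>"
begin

lemma rep: "is_rep G m \<sigma>" using irr unfolding irreducible_rep_def by auto
lemma mpos: "m > 0" using irr unfolding irreducible_rep_def by auto
lemma sc[simp]: "g \<in> carrier G \<Longrightarrow> \<sigma> g \<in> carrier_mat m m" using rep unfolding is_rep_def by auto
lemma dr[simp]: "g \<in> carrier G \<Longrightarrow> dim_row (\<sigma> g) = m" using sc by blast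
lemma dc[simp]: "g \<in> carrier G \<Longrightarrow> dim_col (\<sigma> g) = m" using sc by blast
lemma shom: "g \<in> carrier G \<Longrightarrow> h \<in> carrier G \<Longrightarrow> \<sigma> (g \<otimes>\<^bsub>G\<^esub> h) = \<sigma> g * \<sigma> h"
  using rep unfolding is_rep_def by auto
lemma sone: "\<sigma> \<one>\<^bsub>G\<^esub> = 1\<^sub>m m" using rep unfolding is_rep_def by auto
lemma sinv: "g \<in> carrier G \<Longrightarrow> \<sigma> g * \<sigma> (inv\<^bsub>G\<^esub> g) = 1\<^sub>m m"
proof -
  assume g: "g \<in> carrier G"
  interpret group G by (rule grp)
  have "\<sigma> g * \<sigma> (inv g) = \<sigma> (g \<otimes> inv g)" by (rule shom[symmetric]) (use g in auto)
  also have "g \<otimes> inv g = \<one>" using g by simp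
  finally have "\<sigma> g * \<sigma> (inv g) = \<sigma> \<one>" .
  thus ?thesis unfolding sone .
qed

lemma ortho:
  assumes a: "a < m" and b: "b < m" and i: "i < m" and j: "j < m"
  shows "(\<Sum>x\<in>carrier G. \<sigma> (inv\<^bsub>G\<^esub> x) $$ (i, a) * \<sigma> x $$ (b, j))
       = (if i = j \<and> a = b then of_nat (card (carrier G)) / of_nat m else 0)"
proof -
  interpret group G by (rule grp)
  define E :: "complex mat" where "E = mat m m (\<lambda>(s, r). if s = a \<and> r = b then 1 else 0)"
  have E: "E \<in> carrier_mat m m" unfolding E_def by simp
  have fe: "(P * E * Q) $$ (k, l) = P $$ (k, a) * Q $$ (b, l)"
    if "P \<in> carrier_mat m m" "Q \<in> carrier_mat m m" "k < m" "l < m" for P Q k l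
  proof -
    have "(P * E * Q) $$ (k, l) = (\<Sum>r<m. (P * E) $$ (k, r) * Q $$ (r, l))"
      using that E by (intro mult_entry) auto
    also have "\<dots> = (\<Sum>r<m. (\<Sum>s<m. P $$ (k, s) * E $$ (s, r)) * Q $$ (r, l))"
      using that E by (intro sum.cong refl, subst mult_entry) auto
    also have "\<dots> = (\<Sum>r<m. (if r = b then P $$ (k, a) * Q $$ (r, l) else 0))"
      using a b by (intro sum.cong refl) (auto simp: E_def if_distrib cong: if_cong)
    also have "\<dots> = P $$ (k, a) * Q $$ (b, l)" using b by simp
    finally show ?thesis .
  qed
  define f where "f x = \<sigma> (inv x) * E * \<sigma> x" for x
  have fc: "x \<in> carrier G \<Longrightarrow> f x \<in> carrier_mat m m" for x unfolding f_def using E sc by (auto intro!: mult_carrier_mat)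
  define M where "M = mat m m (\<lambda>(k, l). \<Sum>x\<in>carrier G. f x $$ (k, l))"
  have M: "M \<in> carrier_mat m m" unfolding M_def by simp
  have comm: "\<forall>g\<in>carrier G. \<sigma> g * M = M * \<sigma> g"
  proof
    fix g assume g: "g \<in> carrier G"
    show "\<sigma> g * M = M * \<sigma> g"
    proof (rule eq_matI)
      fix k l assume "k < dim_row (M * \<sigma> g)" "l < dim_col (M * \<sigma> g)"
      hence k: "k < m" and l: "l < m" using M sc[OF g] by auto
      have "(\<sigma> g * M) $$ (k, l) = (\<Sum>r<m. \<sigma> g $$ (k, r) * (\<Sum>x\<in>carrier G. f x $$ (r, l)))"
        using g M k l by (subst mult_entry[of _ m m]) (auto simp: M_def intro!: sum.cong)
      also have "\<dots> = (\<Sum>x\<in>carrier G. \<Sum>r<m. \<sigma> g $$ (k, r) * f x $$ (r, l))"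
        by (simp add: sum_distrib_left sum.swap[of _ "carrier G"])
      also have "\<dots> = (\<Sum>x\<in>carrier G. (\<sigma> g * f x) $$ (k, l))"
        by (intro sum.cong refl, rule mult_entry[symmetric]) (use g fc k l in auto)
      also have "\<dots> = (\<Sum>x\<in>carrier G. (\<sigma> (g \<otimes> inv x) * E * \<sigma> x) $$ (k, l))"
      proof (intro sum.cong refl)
        fix x assume x: "x \<in> carrier G"
        have "\<sigma> g * f x = \<sigma> g * \<sigma> (inv x) * E * \<sigma> x"
          unfolding f_def by (rule assoc4) (use g x E in auto)
        also have "\<sigma> g * \<sigma> (inv x) = \<sigma> (g \<otimes> inv x)" by (rule shom[symmetric]) (use g x in auto)
        finally show "(\<sigma> g * f x) $$ (k, l) = (\<sigma> (g \<otimes> inv x) * E * \<sigma> x) $$ (k, l)" by simp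
      qed
      also have "\<dots> = (\<Sum>x\<in>carrier G. (\<sigma> (g \<otimes> inv (x \<otimes> g)) * E * \<sigma> (x \<otimes> g)) $$ (k, l))"
        using sum_reindex_right[OF grp g, of "\<lambda>y. (\<sigma> (g \<otimes> inv y) * E * \<sigma> y) $$ (k, l)"] by simp
      also have "\<dots> = (\<Sum>x\<in>carrier G. (f x * \<sigma> g) $$ (k, l))"
      proof (intro sum.cong refl)
        fix x assume x: "x \<in> carrier G"
        have "g \<otimes> inv (x \<otimes> g) = inv x" using g x by (simp add: inv_mult_group m_assoc[symmetric])
        moreover have "\<sigma> (x \<otimes> g) = \<sigma> x * \<sigma> g" using g x by (simp add: shom)
        moreover have "\<sigma> (inv x) * E * (\<sigma> x * \<sigma> g) = f x * \<sigma> g"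
          unfolding f_def by (rule assoc4[symmetric]) (use g x E in auto)
        ultimately show "(\<sigma> (g \<otimes> inv (x \<otimes> g)) * E * \<sigma> (x \<otimes> g)) $$ (k, l) = (f x * \<sigma> g) $$ (k, l)" by simp
      qed
      also have "\<dots> = (\<Sum>x\<in>carrier G. \<Sum>r<m. f x $$ (k, r) * \<sigma> g $$ (r, l))"
        by (intro sum.cong refl, rule mult_entry) (use g fc k l in auto)
      also have "\<dots> = (\<Sum>r<m. (\<Sum>x\<in>carrier G. f x $$ (k, r)) * \<sigma> g $$ (r, l))"
        by (simp add: sum_distrib_right sum.swap[of _ "carrier G"])
      also have "\<dots> = (M * \<sigma> g) $$ (k, l)"
        using g M k l by (subst mult_entry[of _ m m]) (auto simp: M_def intro!: sum.cong)
      finally show "(\<sigma> g * M) $$ (k, l) = (M * \<sigma> g) $$ (k, l)" .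
    qed (use M sc[OF g] in auto)
  qed
  obtain c where c: "\<forall>k<m. \<forall>l<m. M $$ (k, l) = (if k = l then c else 0)"
    using schur[OF irr M comm] by blast
  have "(\<Sum>k<m. M $$ (k, k)) = of_nat m * c" using c by simp
  moreover have "(\<Sum>k<m. M $$ (k, k)) = (\<Sum>x\<in>carrier G. \<Sum>k<m. \<sigma> (inv x) $$ (k, a) * \<sigma> x $$ (b, k))"
    by (simp add: M_def f_def sum.swap[of _ "carrier G"] del: index_mult_mat)
      (intro sum.cong refl, rule fe, auto intro!: mult_carrier_mat)
  moreover have "\<dots> = (\<Sum>x\<in>carrier G. (\<sigma> x * \<sigma> (inv x)) $$ (b, a))"
    using a b by (intro sum.cong refl) (subst mult_entry[of _ m m _ m], auto simp: mult.commute)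
  moreover have "\<dots> = (\<Sum>x\<in>carrier G. (if b = a then 1 else 0))"
    using a b by (intro sum.cong refl) (simp add: sinv)
  ultimately have "of_nat m * c = (if a = b then of_nat (card (carrier G)) else 0)" by auto
  hence cval: "c = (if a = b then of_nat (card (carrier G)) / of_nat m else 0)"
    using mpos by (auto simp: field_simps)
  have "(\<Sum>x\<in>carrier G. \<sigma> (inv x) $$ (i, a) * \<sigma> x $$ (b, j)) = M $$ (i, j)"
    using i j by (simp add: M_def f_def del: index_mult_mat) (intro sum.cong refl, rule fe[symmetric], auto)
  thus ?thesis using c cval i j by auto
qed


lemma trace4:
  assumes "P \<in> carrier_mat m m" "A \<in> carrier_mat m m" "Q \<in> carrier_mat m m" "B \<in> carrier_mat m m"
  shows "mat_trace (P * A * Q * B) =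
    (\<Sum>i<m. \<Sum>l<m. \<Sum>k<m. \<Sum>j<m. P $$ (i, j) * A $$ (j, k) * Q $$ (k, l) * B $$ (l, i))"
proof -
  have "mat_trace (P * A * Q * B) = (\<Sum>i<m. (P * A * Q * B) $$ (i, i))"
    using assms by (simp add: mat_trace_def)
  also have "\<dots> = (\<Sum>i<m. \<Sum>l<m. (P * A * Q) $$ (i, l) * B $$ (l, i))"
    by (intro sum.cong refl, rule mult_entry) (use assms in auto)
  also have "\<dots> = (\<Sum>i<m. \<Sum>l<m. (\<Sum>k<m. (P * A) $$ (i, k) * Q $$ (k, l)) * B $$ (l, i))"
    by (intro sum.cong refl arg_cong2[where f = "(*)"], rule mult_entry) (use assms in auto)
  also have "\<dots> = (\<Sum>i<m. \<Sum>l<m. (\<Sum>k<m. (\<Sum>j<m. P $$ (i, j) * A $$ (j, k)) * Q $$ (k, l)) * B $$ (l, i))"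
    by (intro sum.cong refl arg_cong2[where f = "(*)"], rule mult_entry) (use assms in auto)
  also have "\<dots> = (\<Sum>i<m. \<Sum>l<m. \<Sum>k<m. \<Sum>j<m. P $$ (i, j) * A $$ (j, k) * Q $$ (k, l) * B $$ (l, i))"
    by (simp add: sum_distrib_right)
  finally show ?thesis .
qed

lemma trace_avg:
  assumes A: "A \<in> carrier_mat m m" and B: "B \<in> carrier_mat m m"
  shows "(\<Sum>x\<in>carrier G. mat_trace (\<sigma> (inv\<^bsub>G\<^esub> x) * A * \<sigma> x * B))
     = of_nat (card (carrier G)) / of_nat m * mat_trace A * mat_trace B"
proof -
  interpret group G by (rule grp)
  define c :: complex where "c = of_nat (card (carrier G)) / of_nat m"
  have "(\<Sum>x\<in>carrier G. mat_trace (\<sigma> (inv x) * A * \<sigma> x * B))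
     = (\<Sum>x\<in>carrier G. \<Sum>i<m. \<Sum>l<m. \<Sum>k<m. \<Sum>j<m. \<sigma> (inv x) $$ (i, j) * A $$ (j, k) * \<sigma> x $$ (k, l) * B $$ (l, i))"
    by (intro sum.cong refl trace4) (use A B in auto)
  also have "\<dots> = (\<Sum>i<m. \<Sum>l<m. \<Sum>k<m. \<Sum>j<m. \<Sum>x\<in>carrier G. \<sigma> (inv x) $$ (i, j) * A $$ (j, k) * \<sigma> x $$ (k, l) * B $$ (l, i))"
    by (simp only: sum.swap[of _ "carrier G"])
  also have "\<dots> = (\<Sum>i<m. \<Sum>l<m. \<Sum>k<m. \<Sum>j<m. A $$ (j, k) * B $$ (l, i) * (\<Sum>x\<in>carrier G. \<sigma> (inv x) $$ (i, j) * \<sigma> x $$ (k, l)))"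
    by (simp add: sum_distrib_left mult_ac)
  also have "\<dots> = (\<Sum>i<m. \<Sum>l<m. \<Sum>k<m. \<Sum>j<m. A $$ (j, k) * B $$ (l, i) * (if i = l \<and> j = k then c else 0))"
    by (intro sum.cong refl arg_cong2[where f = "(*)"]) (simp_all add: ortho c_def)
  also have "\<dots> = (\<Sum>i<m. \<Sum>j<m. c * A $$ (j, j) * B $$ (i, i))"
    by (simp only: diag_sum2) (simp add: mult_ac)
  also have "\<dots> = c * mat_trace A * mat_trace B"
  proof -
    have tA: "mat_trace A = (\<Sum>j<m. A $$ (j, j))" using A by (simp add: mat_trace_def)
    have tB: "mat_trace B = (\<Sum>i<m. B $$ (i, i))" using B by (simp add: mat_trace_def)
    show ?thesis unfolding tA tB by (simp add: sum_distrib_left sum_distrib_right mult_ac, rule sum.swap)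
  qed
  finally show ?thesis by (simp add: c_def)
qed

lemma trace_avg2:
  assumes B: "B \<in> carrier_mat m m"
  shows "(\<Sum>y\<in>carrier G. mat_trace (\<sigma> (inv\<^bsub>G\<^esub> y)) * mat_trace (\<sigma> y * B))
     = of_nat (card (carrier G)) / of_nat m * mat_trace B"
proof -
  interpret group G by (rule grp)
  define c :: complex where "c = of_nat (card (carrier G)) / of_nat m"
  have "(\<Sum>y\<in>carrier G. mat_trace (\<sigma> (inv y)) * mat_trace (\<sigma> y * B))
     = (\<Sum>y\<in>carrier G. \<Sum>i<m. \<Sum>j<m. \<Sum>k<m. \<sigma> (inv y) $$ (i, i) * \<sigma> y $$ (j, k) * B $$ (k, j))"
  proof (intro sum.cong refl)
    fix y assume y: "y \<in> carrier G"
    have t1: "mat_trace (\<sigma> y * B) = (\<Sum>j<m. \<Sum>k<m. \<sigma> y $$ (j, k) * B $$ (k, j))"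
      unfolding mat_trace_def using y B sc[OF y] carrier_matD[OF sc[OF y]]
      by (simp del: index_mult_mat(1)) (intro sum.cong refl, rule mult_entry, auto)
    have t2: "mat_trace (\<sigma> (inv y)) = (\<Sum>i<m. \<sigma> (inv y) $$ (i, i))"
      using y by (simp add: mat_trace_def)
    show "mat_trace (\<sigma> (inv y)) * mat_trace (\<sigma> y * B) = (\<Sum>i<m. \<Sum>j<m. \<Sum>k<m. \<sigma> (inv y) $$ (i, i) * \<sigma> y $$ (j, k) * B $$ (k, j))"
      unfolding t1 t2 by (subst sum_distrib_right, simp only: sum_distrib_left mult.assoc)
  qed
  also have "\<dots> = (\<Sum>i<m. \<Sum>j<m. \<Sum>k<m. \<Sum>y\<in>carrier G. \<sigma> (inv y) $$ (i, i) * \<sigma> y $$ (j, k) * B $$ (k, j))"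
    by (simp only: sum.swap[of _ "carrier G"])
  also have "\<dots> = (\<Sum>i<m. \<Sum>j<m. \<Sum>k<m. B $$ (k, j) * (\<Sum>y\<in>carrier G. \<sigma> (inv y) $$ (i, i) * \<sigma> y $$ (j, k)))"
    by (simp add: sum_distrib_left mult_ac)
  also have "\<dots> = (\<Sum>i<m. \<Sum>j<m. \<Sum>k<m. B $$ (k, j) * (if i = k \<and> i = j then c else 0))"
    by (intro sum.cong refl arg_cong2[where f = "(*)"]) (simp_all add: ortho c_def)
  also have "\<dots> = (\<Sum>i<m. c * B $$ (i, i))"
    by (simp only: diag_sum3) (simp add: mult_ac)
  also have "\<dots> = c * mat_trace B"
    using B by (simp add: mat_trace_def sum_distrib_left)
  finally show ?thesis by (simp add: c_def)
qed


lemma rep4: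
  assumes "a \<in> carrier G" "b \<in> carrier G" "c \<in> carrier G" "d \<in> carrier G"
  shows "\<sigma> (a \<otimes> b \<otimes> c \<otimes> d) = \<sigma> a * \<sigma> b * \<sigma> c * \<sigma> d"
proof -
  interpret group G by (rule grp)
  show ?thesis using assms by (simp add: shom)
qed

lemma comm_sum:
  assumes h: "h \<in> carrier G"
  shows "(\<Sum>x\<in>carrier G. \<Sum>y\<in>carrier G. mat_trace (\<sigma> (commutator G x y \<otimes> h)))
    = of_nat (card (carrier G)) / of_nat m * (of_nat (card (carrier G)) / of_nat m) * mat_trace (\<sigma> h)"
proof -
  interpret group G by (rule grp)
  define c :: complex where "c = of_nat (card (carrier G)) / of_nat m"
  have "(\<Sum>x\<in>carrier G. \<Sum>y\<in>carrier G. mat_trace (\<sigma> (commutator G x y \<otimes> h)))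
     = (\<Sum>y\<in>carrier G. \<Sum>x\<in>carrier G. mat_trace (\<sigma> (inv x) * \<sigma> (inv y) * \<sigma> x * \<sigma> (y \<otimes> h)))"
    apply (subst sum.swap)
  proof (intro sum.cong refl)
    fix x y assume x: "x \<in> carrier G" and y: "y \<in> carrier G"
    have "commutator G x y \<otimes> h = inv x \<otimes> inv y \<otimes> x \<otimes> (y \<otimes> h)"
      using x y h by (simp add: commutator_def m_assoc)
    also have "\<sigma> \<dots> = \<sigma> (inv x) * \<sigma> (inv y) * \<sigma> x * \<sigma> (y \<otimes> h)"
      using x y h by (intro rep4) auto
    finally show "mat_trace (\<sigma> (commutator G x y \<otimes> h)) = mat_trace (\<sigma> (inv x) * \<sigma> (inv y) * \<sigma> x * \<sigma> (y \<otimes> h))"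
      by simp
  qed
  also have "\<dots> = (\<Sum>y\<in>carrier G. c * mat_trace (\<sigma> (inv y)) * mat_trace (\<sigma> y * \<sigma> h))"
  proof (intro sum.cong refl)
    fix y assume y: "y \<in> carrier G"
    show "(\<Sum>x\<in>carrier G. mat_trace (\<sigma> (inv x) * \<sigma> (inv y) * \<sigma> x * \<sigma> (y \<otimes> h)))
      = c * mat_trace (\<sigma> (inv y)) * mat_trace (\<sigma> y * \<sigma> h)"
      using trace_avg[of "\<sigma> (inv y)" "\<sigma> (y \<otimes> h)"] y h mult_carrier_mat[OF sc[OF y] sc[OF h]] by (simp add: c_def shom)
  qed
  also have "\<dots> = c * (\<Sum>y\<in>carrier G. mat_trace (\<sigma> (inv y)) * mat_trace (\<sigma> y * \<sigma> h))"
    by (simp add: sum_distrib_left mult_ac)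
  also have "\<dots> = c * (c * mat_trace (\<sigma> h))"
    using trace_avg2[of "\<sigma> h"] h by (simp add: c_def)
  finally show ?thesis by (simp add: c_def mult_ac)
qed

end

lemma mat_trace_one[simp]: "mat_trace (1\<^sub>m n) = of_nat n"
  by (simp add: mat_trace_def)

lemma comm_swap:
  fixes G (structure)
  assumes "group G" "x \<in> carrier G" "y \<in> carrier G"
  shows "commutator G y x = inv\<^bsub>G\<^esub> (commutator G x y)"
proof -
  interpret group G by fact
  have "inv (inv x \<otimes> inv y \<otimes> x \<otimes> y) = inv y \<otimes> inv (inv x \<otimes> inv y \<otimes> x)"
    using assms by (simp add: inv_mult_group)
  also have "inv (inv x \<otimes> inv y \<otimes> x) = inv x \<otimes> inv (inv x \<otimes> inv y)"
    using assms by (simp add: inv_mult_group)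
  also have "inv (inv x \<otimes> inv y) = y \<otimes> x"
    using assms by (simp add: inv_mult_group)
  finally show ?thesis using assms by (simp add: commutator_def m_assoc)
qed

lemma card_comm_inv:
  fixes G (structure)
  assumes "group G" "g \<in> carrier G"
  shows "card {(x, y). x \<in> carrier G \<and> y \<in> carrier G \<and> commutator G x y = g}
       = card {(x, y). x \<in> carrier G \<and> y \<in> carrier G \<and> commutator G x y = inv\<^bsub>G\<^esub> g}"
proof -
  interpret group G by fact
  let ?A = "{(x, y). x \<in> carrier G \<and> y \<in> carrier G \<and> commutator G x y = g}"
  let ?B = "{(x, y). x \<in> carrier G \<and> y \<in> carrier G \<and> commutator G x y = inv g}"
  have eq: "(\<lambda>(x, y). (y, x)) ` ?A = ?B"
  proof (intro equalityI subsetI)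
    fix p assume "p \<in> (\<lambda>(x, y). (y, x)) ` ?A"
    then obtain x y where p: "p = (y, x)" and xy: "x \<in> carrier G" "y \<in> carrier G" "commutator G x y = g"
      by auto
    have "commutator G y x = inv g" using comm_swap[OF assms(1) xy(1,2)] xy(3) by simp
    then show "p \<in> ?B" using p xy by blast
  next
    fix p assume p: "p \<in> ?B"
    then obtain x y where xy: "p = (x, y)" "x \<in> carrier G" "y \<in> carrier G" "commutator G x y = inv g"
      by blast
    have "commutator G y x = inv (inv g)" using comm_swap[OF assms(1) xy(2,3)] xy(4) by simp
    hence "commutator G y x = g" using assms(2) by simp
    hence "(y, x) \<in> ?A" using xy by blast
    show "p \<in> (\<lambda>(x, y). (y, x)) ` ?A" by (rule image_eqI[OF _ \<open>(y, x) \<in> ?A\<close>]) (simp add: xy(1))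
  qed
  have inj: "inj_on (\<lambda>(x, y). (y, x)) ?A" by (rule inj_onI) auto
  show ?thesis using card_image[OF inj] unfolding eq by simp
qed


theorem corollary5:
  fixes G :: "('a, 'b) monoid_scheme"
    and \<chi> :: "'a \<Rightarrow> complex"
    and q :: nat
    and a :: "nat \<Rightarrow> nat"
    and \<chi>s :: "nat \<Rightarrow> 'a \<Rightarrow> complex"
  assumes "group G"
    and "finite (carrier G)"
    and "irr_char G \<chi>"
    and "\<And>i. i < q \<Longrightarrow> a i > 0"
    and "\<And>i. i < q \<Longrightarrow> irr_char G (\<chi>s i)"
    and "\<And>i j. i < q \<Longrightarrow> j < q \<Longrightarrow> i \<noteq> j \<Longrightarrow>
           (\<exists>g\<in>carrier G. \<chi>s i g \<noteq> \<chi>s j g)"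
    and "\<And>g. g \<in> carrier G \<Longrightarrow>
           \<chi> g * cnj (\<chi> g) = (\<Sum>i<q. of_nat (a i) * \<chi>s i g)"
  shows "(\<forall>g\<in>carrier G.
            comm_prob G g \<le>
              Re (\<Sum>i<q. (of_nat (a i) / (\<chi>s i \<one>\<^bsub>G\<^esub>)\<^sup>2) * \<chi>s i g)
              / Re (\<Sum>i<q. of_nat (a i) * \<chi>s i \<one>\<^bsub>G\<^esub>))
       \<and> comm_prob G \<one>\<^bsub>G\<^esub> \<le>
              Re (\<Sum>i<q. of_nat (a i) / \<chi>s i \<one>\<^bsub>G\<^esub>)
              / Re (\<Sum>i<q. of_nat (a i) * \<chi>s i \<one>\<^bsub>G\<^esub>)"
proof -
  interpret group G by fact
  note grp = assms(1) and fin = assms(2)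
  obtain n \<rho> where irrho: "irreducible_rep G n \<rho>" and chi: "\<forall>g\<in>carrier G. \<chi> g = mat_trace (\<rho> g)"
    using assms(3) unfolding irr_char_def by blast
  interpret R: irrep G n \<rho> using grp fin irrho by unfold_locales
  have "\<forall>i. \<exists>p. i < q \<longrightarrow> irreducible_rep G (fst p) (snd p) \<and> (\<forall>g\<in>carrier G. \<chi>s i g = mat_trace (snd p g))"
    using assms(5) unfolding irr_char_def by fastforce
  from choice[OF this] obtain f where f0: "\<forall>i. i < q \<longrightarrow> irreducible_rep G (fst (f i)) (snd (f i)) \<and> (\<forall>g\<in>carrier G. \<chi>s i g = mat_trace (snd (f i) g))"
    by blast
  have f: "\<And>i. i < q \<Longrightarrow> irreducible_rep G (fst (f i)) (snd (f i)) \<and> (\<forall>g\<in>carrier G. \<chi>s i g = mat_trace (snd (f i) g))"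
    using f0 by blast
  define ms where "ms i = fst (f i)" for i
  define \<sigma>s where "\<sigma>s i = snd (f i)" for i
  have irs: "i < q \<Longrightarrow> irrep G (ms i) (\<sigma>s i)" for i
    using f[of i] grp fin unfolding ms_def \<sigma>s_def by unfold_locales auto
  have chis: "i < q \<Longrightarrow> g \<in> carrier G \<Longrightarrow> \<chi>s i g = mat_trace (\<sigma>s i g)" for i g
    using f[of i] unfolding \<sigma>s_def by auto
  have chis1: "i < q \<Longrightarrow> \<chi>s i \<one>\<^bsub>G\<^esub> = of_nat (ms i)" for i
    using chis[of i "\<one>\<^bsub>G\<^esub>"] irrep.sone[OF irs[of i]] by simp
  have mspos: "i < q \<Longrightarrow> ms i > 0" for i using irrep.mpos[OF irs[of i]] .
  have chi1: "\<chi> \<one>\<^bsub>G\<^esub> = of_nat n" using chi R.sone by simp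
  have npos: "n > 0" by (rule R.mpos)
  define N where "N = card (carrier G)"
  define S where "S g = (\<Sum>i<q. (of_nat (a i) / (\<chi>s i \<one>\<^bsub>G\<^esub>)\<^sup>2) * \<chi>s i g)" for g
  have den: "Re (\<Sum>i<q. of_nat (a i) * \<chi>s i \<one>\<^bsub>G\<^esub>) = real n ^ 2"
  proof -
    have e: "(\<Sum>i<q. of_nat (a i) * \<chi>s i \<one>\<^bsub>G\<^esub>) = complex_of_real (real n ^ 2)"
      using assms(7)[of "\<one>\<^bsub>G\<^esub>"] chi1 by (simp add: power2_eq_square)
    show ?thesis unfolding e by (simp only: Re_complex_of_real)
  qed
  have main: "comm_prob G g \<le> Re (S g) / real n ^ 2" if g: "g \<in> carrier G" for g
  proof -
    define F where "F x y = \<chi> (commutator G x y \<otimes>\<^bsub>G\<^esub> g)" for x y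
    have cc: "x \<in> carrier G \<Longrightarrow> y \<in> carrier G \<Longrightarrow> commutator G x y \<otimes>\<^bsub>G\<^esub> g \<in> carrier G" for x y
      using g unfolding commutator_def by simp
    have T: "(\<Sum>x\<in>carrier G. \<Sum>y\<in>carrier G. F x y * cnj (F x y)) = of_nat N ^ 2 * S g"
    proof -
      have "(\<Sum>x\<in>carrier G. \<Sum>y\<in>carrier G. F x y * cnj (F x y))
          = (\<Sum>x\<in>carrier G. \<Sum>y\<in>carrier G. \<Sum>i<q. of_nat (a i) * mat_trace (\<sigma>s i (commutator G x y \<otimes>\<^bsub>G\<^esub> g)))"
      proof (intro sum.cong refl)
        fix x y assume x: "x \<in> carrier G" and y: "y \<in> carrier G"
        have "F x y * cnj (F x y) = (\<Sum>i<q. of_nat (a i) * \<chi>s i (commutator G x y \<otimes>\<^bsub>G\<^esub> g))"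
          unfolding F_def by (rule assms(7)[OF cc[OF x y]])
        also have "\<dots> = (\<Sum>i<q. of_nat (a i) * mat_trace (\<sigma>s i (commutator G x y \<otimes>\<^bsub>G\<^esub> g)))"
          by (intro sum.cong refl arg_cong2[where f = "(*)"] chis cc[OF x y]) simp
        finally show "F x y * cnj (F x y) = (\<Sum>i<q. of_nat (a i) * mat_trace (\<sigma>s i (commutator G x y \<otimes>\<^bsub>G\<^esub> g)))" .
      qed
      also have "\<dots> = (\<Sum>i<q. of_nat (a i) * (\<Sum>x\<in>carrier G. \<Sum>y\<in>carrier G. mat_trace (\<sigma>s i (commutator G x y \<otimes>\<^bsub>G\<^esub> g))))"
      proof -
        have "(\<Sum>x\<in>carrier G. \<Sum>y\<in>carrier G. \<Sum>i<q. of_nat (a i) * mat_trace (\<sigma>s i (commutator G x y \<otimes>\<^bsub>G\<^esub> g)))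
            = (\<Sum>x\<in>carrier G. \<Sum>i<q. \<Sum>y\<in>carrier G. of_nat (a i) * mat_trace (\<sigma>s i (commutator G x y \<otimes>\<^bsub>G\<^esub> g)))"
          by (intro sum.cong refl) (rule sum.swap)
        also have "\<dots> = (\<Sum>i<q. \<Sum>x\<in>carrier G. \<Sum>y\<in>carrier G. of_nat (a i) * mat_trace (\<sigma>s i (commutator G x y \<otimes>\<^bsub>G\<^esub> g)))"
          by (rule sum.swap)
        finally show ?thesis by (simp only: sum_distrib_left)
      qed
      also have "\<dots> = (\<Sum>i<q. of_nat N ^ 2 * ((of_nat (a i) / (\<chi>s i \<one>\<^bsub>G\<^esub>)\<^sup>2) * \<chi>s i g))"
      proof (intro sum.cong refl)
        fix i assume "i \<in> {..<q}"
        hence i: "i < q" by simp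
        have "(\<Sum>x\<in>carrier G. \<Sum>y\<in>carrier G. mat_trace (\<sigma>s i (commutator G x y \<otimes>\<^bsub>G\<^esub> g)))
            = of_nat N / of_nat (ms i) * (of_nat N / of_nat (ms i)) * \<chi>s i g"
          using irrep.comm_sum[OF irs[OF i] g] chis[OF i g] by (simp add: N_def)
        moreover have "(of_nat (ms i) :: complex) \<noteq> 0" using mspos[OF i] by simp
        ultimately show "of_nat (a i) * (\<Sum>x\<in>carrier G. \<Sum>y\<in>carrier G. mat_trace (\<sigma>s i (commutator G x y \<otimes>\<^bsub>G\<^esub> g)))
            = of_nat N ^ 2 * ((of_nat (a i) / (\<chi>s i \<one>\<^bsub>G\<^esub>)\<^sup>2) * \<chi>s i g)"
          unfolding chis1[OF i] by (simp add: power2_eq_square divide_simps)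
      qed
      also have "\<dots> = of_nat N ^ 2 * S g"
        unfolding S_def by (simp only: sum_distrib_left)
      finally show ?thesis .
    qed
    define P where "P = {(x, y). x \<in> carrier G \<and> y \<in> carrier G \<and> commutator G x y = inv\<^bsub>G\<^esub> g}"
    have Psub: "P \<subseteq> carrier G \<times> carrier G" unfolding P_def by auto
    have nonneg: "0 \<le> Re (F x y * cnj (F x y))" for x y
      by (simp add: complex_norm_square[symmetric])
    have "real (card P) * real n ^ 2 = (\<Sum>p\<in>P. Re (F (fst p) (snd p) * cnj (F (fst p) (snd p))))"
    proof -
      have "Re (F (fst p) (snd p) * cnj (F (fst p) (snd p))) = real n ^ 2" if p: "p \<in> P" for p
      proof -
        have "commutator G (fst p) (snd p) = inv\<^bsub>G\<^esub> g" using p unfolding P_def by auto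
        hence "commutator G (fst p) (snd p) \<otimes>\<^bsub>G\<^esub> g = \<one>\<^bsub>G\<^esub>" using g by simp
        hence "F (fst p) (snd p) = of_nat n" unfolding F_def using chi1 by simp
        thus ?thesis by (simp add: power2_eq_square)
      qed
      thus ?thesis by simp
    qed
    also have "\<dots> \<le> (\<Sum>p\<in>carrier G \<times> carrier G. Re (F (fst p) (snd p) * cnj (F (fst p) (snd p))))"
      by (rule sum_mono2) (use fin Psub nonneg in auto)
    also have "\<dots> = Re (\<Sum>x\<in>carrier G. \<Sum>y\<in>carrier G. F x y * cnj (F x y))"
      by (simp only: Re_sum, subst sum.cartesian_product, simp add: case_prod_beta)
    also have "\<dots> = real N ^ 2 * Re (S g)" unfolding T by simp
    finally have ineq: "real (card P) * real n ^ 2 \<le> real N ^ 2 * Re (S g)" .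
    have cardP: "card {(x, y). x \<in> carrier G \<and> y \<in> carrier G \<and> commutator G x y = g} = card P"
      unfolding P_def by (rule card_comm_inv[OF grp g])
    have Npos: "N > 0" unfolding N_def using fin g by (auto simp: card_gt_0_iff)
    have "comm_prob G g = real (card P) / real N ^ 2"
      unfolding comm_prob_def cardP N_def ..
    also have "\<dots> \<le> Re (S g) / real n ^ 2"
      using ineq Npos npos by (simp add: divide_simps mult.commute)
    finally show ?thesis .
  qed
  show ?thesis
  proof
    show "\<forall>g\<in>carrier G. comm_prob G g \<le> Re (\<Sum>i<q. (of_nat (a i) / (\<chi>s i \<one>\<^bsub>G\<^esub>)\<^sup>2) * \<chi>s i g) / Re (\<Sum>i<q. of_nat (a i) * \<chi>s i \<one>\<^bsub>G\<^esub>)"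
      using main unfolding den S_def by blast
    have "S \<one>\<^bsub>G\<^esub> = (\<Sum>i<q. of_nat (a i) / \<chi>s i \<one>\<^bsub>G\<^esub>)"
      unfolding S_def using chis1 mspos by (intro sum.cong refl) (simp add: power2_eq_square)
    thus "comm_prob G \<one>\<^bsub>G\<^esub> \<le> Re (\<Sum>i<q. of_nat (a i) / \<chi>s i \<one>\<^bsub>G\<^esub>) / Re (\<Sum>i<q. of_nat (a i) * \<chi>s i \<one>\<^bsub>G\<^esub>)"
      using main[of "\<one>\<^bsub>G\<^esub>"] unfolding den by simp
  qed
qed

end
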